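(* Let $T$ be a real-valued random variable with law $\mathrm{P}_0$, and let $T^*$ denote an independent copy of $T$ (also with law $\mathrm{P}_0$). Define the mid-p-value $$Q = \tfrac{1}{2}\,\mathrm{P}_0(T^* \geq T \mid T)+\tfrac{1}{2}\,\mathrm{P}_0(T^* > T \mid T),$$ i.e. $Q = \tfrac12 G(T) + \tfrac12 G^{>}(T)$ where $G(s)=\mathrm{P}_0(T^*\ge s)$ and $G^{>}(s)=\mathrm{P}_0(T^*>s)$. Let $U$ be uniformly distributed on $[0,1]$. Then, when $T\sim\mathrm{P}_0$, $Q$ is dominated by $U$ in the convex order: for every convex function $h:\mathbb{R}\to\mathbb{R}$, $$\mathrm{E}_0\{h(Q)\} \leq \mathrm{E}\{h(U)\},$$ whenever the expectations exist.
   Context: $T$ may be discrete, continuous or mixed. $\mathrm{E}_0$ denotes expectation when $T\sim\mathrm{P}_0$, and $\mathrm{E}$ denotes expectation with respect to the law of $U$. *)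

theory Defs
  imports "HOL-Probability.Probability"
begin

definition upper_tail :: "real measure \<Rightarrow> real \<Rightarrow> real" where
  "upper_tail P0 s = measure P0 {t. s \<le> t}"

definition strict_upper_tail :: "real measure \<Rightarrow> real \<Rightarrow> real" where
  "strict_upper_tail P0 s = measure P0 {t. s < t}"

definition mid_p :: "real measure \<Rightarrow> real \<Rightarrow> real" where
  "mid_p P0 t = upper_tail P0 t / 2 + strict_upper_tail P0 t / 2"

end

theory Submission
  imports Defs
begin

definition U01 :: "real measure" where "U01 = uniform_measure lborel {0..1}"

lemma U_prob: "prob_space U01"
  unfolding U01_def by (rule prob_space_uniform_measure) simp_all

lemma U_sets[simp]: "sets U01 = sets borel" unfolding U01_def by simp
lemma U_space[simp]: "space U01 = UNIV" unfolding U01_def by simp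

lemma U_measure: "B \<in> sets borel \<Longrightarrow> measure U01 B = measure lborel ({0..1} \<inter> B)"
  unfolding U01_def by (subst measure_uniform_measure) auto

lemma inner:
  fixes a b x :: real assumes ab: "0 \<le> a" "a \<le> b"
  shows "b \<le> x \<Longrightarrow> measure U01 {v. a + v * (b - a) \<le> x} = 1"
    and "x < a \<Longrightarrow> measure U01 {v. a + v * (b - a) \<le> x} = 0"
    and "a \<le> x \<Longrightarrow> x < b \<Longrightarrow> measure U01 {v. a + v * (b - a) \<le> x} = (x-a)/(b-a)"
proof -
  let ?S = "{v::real. a + v * (b - a) \<le> x}"
  have Sm: "?S \<in> sets borel" by measurable
  hence mS: "measure U01 ?S = measure lborel ({0..1} \<inter> ?S)" by (rule U_measure)
  { assume bx: "b \<le> x"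
    have "{0..1} \<inter> ?S = {0..1}"
    proof (intro set_eqI iffI)
      fix v :: real assume v: "v \<in> {0..1}"
      have "v * (b - a) \<le> 1*(b-a)" using v ab by (intro mult_right_mono) auto
      thus "v \<in> {0..1} \<inter> ?S" using v bx by simp
    qed simp
    thus "measure U01 ?S = 1" using mS by simp }
  { assume xa: "x < a"
    have "{0..1} \<inter> ?S = {}"
    proof (intro set_eqI iffI)
      fix v :: real assume v: "v \<in> {0..1} \<inter> ?S"
      have "0 \<le> v * (b - a)" using v ab by (intro mult_nonneg_nonneg) auto
      thus "v \<in> {}" using v xa by simp
    qed simp
    thus "measure U01 ?S = 0" using mS by simp }
  { assume ax: "a \<le> x" and xb: "x < b"
    define c where "c = (x-a)/(b-a)"
    have ba: "0 < b - a" using ax xb by simp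
    have c0: "0 \<le> c" unfolding c_def using ax ba by simp
    have c1: "c \<le> 1" unfolding c_def using ba xb by simp
    have "{0..1} \<inter> ?S = {0..c}"
    proof (intro set_eqI)
      fix v :: real
      have "(v \<le> c) = (v * (b - a) \<le> x - a)" unfolding c_def using ba by (simp add: pos_le_divide_eq)
      thus "(v \<in> {0..1} \<inter> ?S) = (v \<in> {0..c})" using c1 by auto
    qed
    thus "measure U01 ?S = (x-a)/(b-a)" using mS c0 unfolding c_def by simp }
qed

lemma U_expect: "integral\<^sup>L U01 (\<lambda>v. v) = 1/2"
proof -
  interpret U: prob_space U01 by (rule U_prob)
  have P: "\<P>(v in U01. v \<le> t) = (t - 0) / (1 - 0)" if t: "0 \<le> t" "t \<le> 1" for t :: real
  proof -
    have "{v \<in> space U01. v \<le> t} \<in> sets borel" by simp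
    hence "measure U01 {v \<in> space U01. v \<le> t} = measure lborel ({0..1} \<inter> {v \<in> space U01. v \<le> t})"
      by (rule U_measure)
    also have "{0..1} \<inter> {v \<in> space U01. v \<le> t} = {0..t}" using t by auto
    finally show ?thesis using t by simp
  qed
  have idm: "(\<lambda>v::real. v) \<in> borel_measurable U01"
  proof -
    have "(\<lambda>v::real. v) \<in> borel_measurable borel" by simp
    thus ?thesis using measurable_cong_sets[OF U_sets refl] by blast
  qed
  note D = U.uniform_distrI_borel_atLeastAtMost[OF idm zero_less_one P]
  from U.uniform_distributed_expectation[OF D] show ?thesis by simp
qed

lemma meas_transfer: fixes P0 :: "real measure" and G :: "real \<Rightarrow> real"
  assumes sP: "sets P0 = sets borel" and "G \<in> borel_measurable borel"
  shows "G \<in> borel_measurable P0"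
  using assms(2) measurable_cong_sets[OF sP refl] by blast

locale mp = prob_space P0 for P0 :: "real measure" +
  assumes sP: "sets P0 = sets borel"
begin

abbreviation "G \<equiv> upper_tail P0"
abbreviation "Gg \<equiv> strict_upper_tail P0"

lemma spc: "space P0 = UNIV"
  using sets_eq_imp_space_eq[OF sP] by simp

lemma sets_P0[simp]: "{t..} \<in> sets P0" "{t<..} \<in> sets P0" "{t} \<in> sets P0"
  using sP by auto

lemma G_eq: "G t = measure P0 {t..}" unfolding upper_tail_def by (simp add: atLeast_def)
lemma Gg_eq: "Gg t = measure P0 {t<..}" unfolding strict_upper_tail_def by (simp add: greaterThan_def)

lemma Gg_le_G: "Gg t \<le> G t"
  unfolding G_eq Gg_eq by (intro finite_measure_mono) auto

lemma G_le_Gg: "t < r \<Longrightarrow> G r \<le> Gg t"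
  unfolding G_eq Gg_eq by (intro finite_measure_mono) auto

lemma G_anti: "t \<le> r \<Longrightarrow> G r \<le> G t"
  unfolding G_eq by (intro finite_measure_mono) auto

lemma Gg_nonneg: "0 \<le> Gg t" unfolding Gg_eq by simp
lemma G_le1: "G t \<le> 1" unfolding G_eq by simp

lemma G_minus: "G t - Gg t = measure P0 {t}"
proof -
  have "{t..} = {t} \<union> {t<..}" by auto
  moreover have "measure P0 ({t} \<union> {t<..}) = measure P0 {t} + measure P0 {t<..}"
    by (rule finite_measure_Union) auto
  ultimately have "measure P0 {t..} = measure P0 {t} + measure P0 {t<..}" by simp
  thus ?thesis unfolding G_eq Gg_eq by simp
qed

lemma F2: assumes "\<And>r. r > t \<Longrightarrow> G r \<le> x" shows "Gg t \<le> x"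
proof -
  have "(\<lambda>n. measure P0 {t + 1/(Suc n)..}) \<longlonglongrightarrow> measure P0 (\<Union>n. {t + 1/(Suc n)..})"
  proof (rule finite_Lim_measure_incseq)
    show "range (\<lambda>n. {t + 1/(Suc n)..}) \<subseteq> events" by auto
    show "incseq (\<lambda>n. {t + 1/(Suc n)..})"
      unfolding incseq_def
    proof (intro allI impI subsetI)
      fix m n :: nat and y assume "m \<le> n" "y \<in> {t + 1/(Suc m)..}"
      moreover have "1/real (Suc n) \<le> 1/real (Suc m)" using \<open>m \<le> n\<close> by (intro divide_left_mono) auto
      ultimately show "y \<in> {t + 1/(Suc n)..}" by simp
    qed
  qed
  also have "(\<Union>n. {t + 1/(Suc n)..}) = {t<..}"
  proof (intro set_eqI iffI)
    fix y assume "y \<in> {t<..}"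
    hence "0 < y - t" by simp
    then obtain n where n: "inverse (real (Suc n)) < y - t" using reals_Archimedean by blast
    have "1/real (Suc n) = inverse (real (Suc n))" by (simp add: inverse_eq_divide)
    with n show "y \<in> (\<Union>n. {t + 1/(Suc n)..})" by (intro UN_I[of n]) auto
  next
    fix y assume "y \<in> (\<Union>n. {t + 1/(Suc n)..})"
    then obtain n where h: "t + 1/(Suc n) \<le> y" by blast
    have "0 < 1/real (Suc n)" by simp
    hence "t < y" using h by linarith
    thus "y \<in> {t<..}" by simp
  qed
  finally have "(\<lambda>n. G (t + 1/Suc n)) \<longlonglongrightarrow> Gg t" unfolding G_eq Gg_eq .
  thus ?thesis by (rule LIMSEQ_le_const2) (auto intro!: assms)
qed

lemma F3: assumes "\<And>r. r < s \<Longrightarrow> G r > x" shows "x \<le> G s"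
proof -
  have "(\<lambda>n. measure P0 {s - 1/(Suc n)<..}) \<longlonglongrightarrow> measure P0 (\<Inter>n. {s - 1/(Suc n)<..})"
  proof (rule finite_Lim_measure_decseq)
    show "range (\<lambda>n. {s - 1/(Suc n)<..}) \<subseteq> events" by auto
    show "decseq (\<lambda>n. {s - 1/(Suc n)<..})"
      unfolding decseq_def
    proof (intro allI impI subsetI)
      fix m n :: nat and y assume "m \<le> n" "y \<in> {s - 1/(Suc n)<..}"
      moreover have "1/real (Suc n) \<le> 1/real (Suc m)" using \<open>m \<le> n\<close> by (intro divide_left_mono) auto
      ultimately show "y \<in> {s - 1/(Suc m)<..}" by simp
    qed
  qed
  also have "(\<Inter>n. {s - 1/(Suc n)<..}) = {s..}"
  proof (intro set_eqI iffI)
    fix y assume y: "y \<in> (\<Inter>n. {s - 1/(Suc n)<..})"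
    show "y \<in> {s..}"
    proof (rule ccontr)
      assume "y \<notin> {s..}"
      hence "0 < s - y" by simp
      then obtain n where n: "inverse (real (Suc n)) < s - y" using reals_Archimedean by blast
      have "1/real (Suc n) = inverse (real (Suc n))" by (simp add: inverse_eq_divide)
      moreover from y have "s - 1/(Suc n) < y" by blast
      ultimately show False using n by simp
    qed
  next
    fix y assume y: "y \<in> {s..}"
    show "y \<in> (\<Inter>n. {s - 1/(Suc n)<..})"
    proof (rule INT_I)
      fix n :: nat
      have "0 < 1/real (Suc n)" by simp
      moreover have "s \<le> y" using y by simp
      ultimately have "s - 1/real (Suc n) < y" by linarith
      thus "y \<in> {s - 1/(Suc n)<..}" by simp
    qed
  qed
  finally have lim: "(\<lambda>n. Gg (s - 1/Suc n)) \<longlonglongrightarrow> G s" unfolding G_eq Gg_eq .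
  have bnd: "x \<le> Gg (s - 1/Suc n)" for n
  proof -
    define e where "e = 1/(Suc n :: real)"
    have p: "0 < e" unfolding e_def by simp
    have "s - e < s - e/2" using p by simp
    hence "G (s - e/2) \<le> Gg (s - e)" by (rule G_le_Gg)
    moreover have "s - e/2 < s" using p by simp
    hence "x < G (s - e/2)" by (rule assms)
    ultimately show ?thesis unfolding e_def by simp
  qed
  show ?thesis by (rule LIMSEQ_le_const[OF lim]) (use bnd in blast)
qed

lemma F4: assumes "x < 1" shows "\<exists>t. x < G t"
proof -
  have "(\<lambda>n. measure P0 {- real n..}) \<longlonglongrightarrow> measure P0 (\<Union>n. {- real n..})"
  proof (rule finite_Lim_measure_incseq)
    show "range (\<lambda>n. {- real n..}) \<subseteq> events" by auto
    show "incseq (\<lambda>n. {- real n..})"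
      unfolding incseq_def by (intro allI impI subsetI) simp
  qed
  also have "(\<Union>n. {- real n..}) = UNIV"
  proof (intro set_eqI iffI)
    fix y :: real
    obtain n where "- y \<le> real n" using real_arch_simple by blast
    thus "y \<in> (\<Union>n. {- real n..})" by (intro UN_I[of n]) auto
  qed simp
  finally have "(\<lambda>n. G (- real n)) \<longlonglongrightarrow> 1" unfolding G_eq using prob_space spc by simp
  from order_tendstoD(1)[OF this assms] obtain n where "x < G (- real n)"
    by (auto simp: eventually_sequentially)
  thus ?thesis by blast
qed

lemma F5: assumes "0 < x" shows "\<exists>t. G t \<le> x"
proof -
  have "(\<lambda>n. measure P0 {real n..}) \<longlonglongrightarrow> measure P0 (\<Inter>n. {real n..})"
  proof (rule finite_Lim_measure_decseq)
    show "range (\<lambda>n. {real n..}) \<subseteq> events" by auto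
    show "decseq (\<lambda>n. {real n..})"
      unfolding decseq_def by (intro allI impI subsetI) simp
  qed
  also have "(\<Inter>n. {real n..}) = {}"
  proof (intro set_eqI iffI)
    fix y :: real assume "y \<in> (\<Inter>n. {real n..})"
    moreover obtain n where "y < real n" using reals_Archimedean2 by blast
    ultimately show "y \<in> {}" by (auto dest: spec[of _ n])
  qed simp
  finally have "(\<lambda>n. G (real n)) \<longlonglongrightarrow> 0" unfolding G_eq by simp
  from order_tendstoD(2)[OF this assms] obtain n where "G (real n) < x"
    by (auto simp: eventually_sequentially)
  thus ?thesis using less_imp_le by blast
qed

lemma G_meas: "G \<in> borel_measurable P0"
proof -
  have "mono (\<lambda>t. - G t)" by (auto simp: mono_def intro: G_anti)
  hence "(\<lambda>t. - (- G t)) \<in> borel_measurable borel" by (intro borel_measurable_uminus borel_measurable_mono)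
  hence "G \<in> borel_measurable borel" by simp
  thus ?thesis by (rule meas_transfer[OF sP])
qed

lemma Gg_meas: "Gg \<in> borel_measurable P0"
proof -
  have "mono (\<lambda>t. - Gg t)" unfolding mono_def Gg_eq by (auto intro!: finite_measure_mono)
  hence "(\<lambda>t. - (- Gg t)) \<in> borel_measurable borel" by (intro borel_measurable_uminus borel_measurable_mono)
  hence "Gg \<in> borel_measurable borel" by simp
  thus ?thesis by (rule meas_transfer[OF sP])
qed

definition Wf :: "real \<times> real \<Rightarrow> real" where
  "Wf z = Gg (fst z) + snd z * (G (fst z) - Gg (fst z))"

lemma Wf_meas: "Wf \<in> borel_measurable (P0 \<Otimes>\<^sub>M U01)"
proof -
  have g: "(\<lambda>z. G (fst z)) \<in> borel_measurable (P0 \<Otimes>\<^sub>M U01)"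
    by (rule measurable_compose[OF measurable_fst G_meas])
  have gg: "(\<lambda>z. Gg (fst z)) \<in> borel_measurable (P0 \<Otimes>\<^sub>M U01)"
    by (rule measurable_compose[OF measurable_fst Gg_meas])
  have idm: "(\<lambda>v::real. v) \<in> borel_measurable U01"
  proof -
    have "(\<lambda>v::real. v) \<in> borel_measurable borel" by simp
    thus ?thesis using measurable_cong_sets[OF U_sets refl] by blast
  qed
  have sn: "(\<lambda>z. snd z) \<in> borel_measurable (P0 \<Otimes>\<^sub>M U01)"
    by (rule measurable_compose[OF measurable_snd idm])
  show ?thesis unfolding Wf_def
    by (intro borel_measurable_add borel_measurable_times borel_measurable_diff g gg sn)
qed

lemma int_cases:
  assumes x: "0 \<le> x" "x \<le> 1"
  shows "(\<integral>t. measure U01 {v. Gg t + v * (G t - Gg t) \<le> x} \<partial>P0) = x"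
proof -
  define F where "F t = measure U01 {v. Gg t + v * (G t - Gg t) \<le> x}" for t
  have F1: "G t \<le> x \<Longrightarrow> F t = 1" for t unfolding F_def by (rule inner(1)[OF Gg_nonneg Gg_le_G])
  have F0: "x < Gg t \<Longrightarrow> F t = 0" for t unfolding F_def by (rule inner(2)[OF Gg_nonneg Gg_le_G])
  have Fm: "Gg t \<le> x \<Longrightarrow> x < G t \<Longrightarrow> F t = (x - Gg t)/(G t - Gg t)" for t
    unfolding F_def by (rule inner(3)[OF Gg_nonneg Gg_le_G])
  define AA where "AA = {t. G t \<le> x}"
  have up: "t \<in> AA \<Longrightarrow> t \<le> r \<Longrightarrow> r \<in> AA" for t r
    unfolding AA_def using G_anti[of t r] by simp
  have ggl: "Gg t \<le> x \<Longrightarrow> t < r \<Longrightarrow> r \<in> AA" for t r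
    unfolding AA_def using G_le_Gg[of t r] by simp
  have "(\<integral>t. F t \<partial>P0) = x"
  proof (cases "AA = UNIV")
    case True
    hence "F t = 1" for t using F1 unfolding AA_def by auto
    hence "(\<integral>t. F t \<partial>P0) = 1" by (simp add: prob_space)
    moreover have "x = 1"
    proof (rule ccontr)
      assume "x \<noteq> 1" hence "x < 1" using x by simp
      then obtain t where t: "x < G t" using F4 by blast
      have "t \<in> AA" using True by simp
      hence "G t \<le> x" unfolding AA_def by simp
      thus False using t by simp
    qed
    ultimately show ?thesis by simp
  next
    case notU: False
    show ?thesis
    proof (cases "AA = {}")
      case True
      have "x = 0"
      proof (rule ccontr)
        assume "x \<noteq> 0" hence "0 < x" using x by simp
        then obtain t where "G t \<le> x" using F5 by blast
        thus False using True unfolding AA_def by auto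
      qed
      have "F t = 0" for t
      proof (rule F0)
        show "x < Gg t"
        proof (rule ccontr)
          assume "\<not> x < Gg t"
          hence "t + 1 \<in> AA" by (intro ggl[of t]) auto
          thus False using True by simp
        qed
      qed
      thus ?thesis using \<open>x = 0\<close> by simp
    next
      case False
      obtain t0 where t0: "t0 \<notin> AA" using notU by auto
      have lb: "r \<in> AA \<Longrightarrow> t0 \<le> r" for r using up[of r t0] t0 by force
      have bdd: "bdd_below AA" using lb by (auto simp: bdd_below_def)
      define s where "s = Inf AA"
      have lowr: "r \<in> AA \<Longrightarrow> s \<le> r" for r unfolding s_def using bdd by (intro cInf_lower)
      have above: "s < r \<Longrightarrow> r \<in> AA" for r
      proof -
        assume "s < r"
        then obtain r' where "r' \<in> AA" "r' < r" unfolding s_def using cInf_less_iff[OF False bdd] by auto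
        thus "r \<in> AA" using up by auto
      qed
      have below: "r < s \<Longrightarrow> r \<notin> AA" for r using lowr by force
      have belowGg: "r < s \<Longrightarrow> x < Gg r" for r
      proof (rule ccontr)
        assume rs: "r < s" and "\<not> x < Gg r"
        hence "(r + s)/2 \<in> AA" by (intro ggl[of r]) auto
        moreover have "(r+s)/2 < s" using rs by simp
        ultimately show False using below by blast
      qed
      have Fbelow: "r < s \<Longrightarrow> F r = 0" for r using F0 belowGg by blast
      have Gbelow: "x < G r" if rs: "r < s" for r
      proof -
        have "r \<notin> AA" using rs by (rule below)
        thus ?thesis unfolding AA_def by simp
      qed
      show ?thesis
      proof (cases "s \<in> AA")
        case True
        have "F t = indicator {s..} t" for t
        proof (cases "s \<le> t")
          case True
          thus ?thesis using F1 up[OF \<open>s \<in> AA\<close> True] unfolding AA_def by simp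
        next
          case False thus ?thesis using Fbelow by simp
        qed
        hence "(\<integral>t. F t \<partial>P0) = measure P0 {s..}" by (simp add: spc)
        also have "\<dots> = G s" by (simp add: G_eq)
        also have "\<dots> = x"
          using True F3[of s x] Gbelow unfolding AA_def by force
        finally show ?thesis .
      next
        case sA: False
        have Gs: "x < G s" using sA unfolding AA_def by simp
        have Ggs: "Gg s \<le> x" by (rule F2) (use above in \<open>auto simp: AA_def\<close>)
        define c where "c = (x - Gg s)/(G s - Gg s)"
        have "F t = indicator {s<..} t + c * indicator {s} t" for t
        proof (cases "s < t")
          case True
          thus ?thesis using F1 above[OF True] unfolding AA_def by simp
        next
          case False
          show ?thesis
          proof (cases "t = s")
            case True thus ?thesis using Fm[OF Ggs Gs] unfolding c_def by simp
          next
            case False thus ?thesis using \<open>\<not> s < t\<close> Fbelow by simp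
          qed
        qed
        hence "(\<integral>t. F t \<partial>P0) = (\<integral>t. indicator {s<..} t + c * indicator {s} t \<partial>P0)" by simp
        also have "\<dots> = measure P0 {s<..} + c * measure P0 {s}"
          by (subst Bochner_Integration.integral_add) (auto simp: spc emeasure_eq_measure)
        also have "\<dots> = Gg s + c * (G s - Gg s)" using G_minus[of s] Gg_eq[of s] by simp
        also have "\<dots> = x" unfolding c_def using Gs Ggs by simp
        finally show ?thesis .
      qed
    qed
  qed
  thus ?thesis unfolding F_def .
qed

lemma cdf_W:
  assumes x: "0 \<le> x" "x \<le> 1"
  shows "measure (P0 \<Otimes>\<^sub>M U01) {z \<in> space (P0 \<Otimes>\<^sub>M U01). Wf z \<le> x} = x"
proof -
  interpret U: prob_space U01 by (rule U_prob)
  interpret PP: pair_prob_space P0 U01 ..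
  let ?M = "P0 \<Otimes>\<^sub>M U01"
  let ?S = "{z \<in> space ?M. Wf z \<le> x}"
  have Sm: "?S \<in> sets ?M" using Wf_meas by measurable
  have "measure ?M ?S = integral\<^sup>L ?M (indicator ?S)"
    using Sm by (simp add: Int_absorb2 sets.sets_into_space)
  also have "\<dots> = (\<integral>t. \<integral>v. indicator ?S (t,v) \<partial>U01 \<partial>P0)"
    using Sm by (intro PP.integral_fst'[symmetric] integrable_real_indicator) (auto simp: less_top[symmetric] PP.emeasure_finite)
  also have "\<dots> = (\<integral>t. measure U01 {v. Gg t + v * (G t - Gg t) \<le> x} \<partial>P0)"
  proof (rule Bochner_Integration.integral_cong[OF refl])
    fix t
    have "(\<lambda>v. indicator ?S (t,v) :: real) = indicator {v. Gg t + v * (G t - Gg t) \<le> x}"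
      by (auto simp: space_pair_measure spc Wf_def indicator_def fun_eq_iff)
    thus "(\<integral>v. indicator ?S (t,v) \<partial>U01) = measure U01 {v. Gg t + v * (G t - Gg t) \<le> x}"
      by simp
  qed
  also have "\<dots> = x" by (rule int_cases[OF x])
  finally show ?thesis .
qed

end

theorem mainTheorem1:
  fixes P0 :: "real measure" and h :: "real \<Rightarrow> real"
  assumes "prob_space P0"
    and "sets P0 = sets borel"
    and "convex_on UNIV h"
    and "integrable P0 (\<lambda>t. h (mid_p P0 t))"
    and "integrable (uniform_measure lborel {0..1}) h"
  shows "(\<integral>t. h (mid_p P0 t) \<partial>P0) \<le> (\<integral>u. h u \<partial>uniform_measure lborel {0..1})"
proof -
  interpret mp P0 using assms(1,2) by (intro mp.intro mp_axioms.intro)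
  interpret U: prob_space U01 by (rule U_prob)
  interpret PP: pair_prob_space P0 U01 ..
  let ?M = "P0 \<Otimes>\<^sub>M U01"
  have hcont: "continuous_on UNIV h" by (rule convex_on_continuous[OF open_UNIV assms(3)])
  have hm: "h \<in> borel_measurable borel" by (rule borel_measurable_continuous_onI[OF hcont])
  have hmU: "h \<in> borel_measurable U01" using hm measurable_cong_sets[OF U_sets refl] by blast
  obtain B where B: "\<And>y. y \<in> {0..1} \<Longrightarrow> norm (h y) \<le> B"
  proof -
    have "compact (h ` {0..1})"
      by (rule compact_continuous_image[OF continuous_on_subset[OF hcont] compact_Icc]) simp
    hence "bounded (h ` {0..1})" by (rule compact_imp_bounded)
    then obtain B where "\<forall>y\<in>h ` {0..1}. norm y \<le> B" unfolding bounded_iff by blast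
    thus ?thesis using that by blast
  qed
  have P: "\<P>(z in ?M. Wf z \<le> t) = (t - 0) / (1 - 0)" if "0 \<le> t" "t \<le> 1" for t :: real
    using cdf_W that by simp
  note D = PP.uniform_distrI_borel_atLeastAtMost[OF Wf_meas zero_less_one P]
  have Wm: "Wf \<in> measurable ?M lborel" using D by (simp add: distributed_def)
  have DU: "distr ?M lborel Wf = U01"
  proof -
    have "distr ?M lborel Wf = density lborel (\<lambda>x. ennreal (indicator {0..1} x))"
      using D by (simp add: distributed_def)
    also have "\<dots> = U01" unfolding U01_def uniform_measure_def
      by (intro density_cong) (auto simp: indicator_def)
    finally show ?thesis .
  qed
  have hmL: "h \<in> borel_measurable lborel" using hm by simp
  have intW: "integrable ?M (\<lambda>z. h (Wf z))"
    using assms(5) integrable_distr_eq[OF Wm hmL] DU unfolding U01_def by simp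
  have "(\<integral>u. h u \<partial>uniform_measure lborel {0..1}) = (\<integral>z. h (Wf z) \<partial>?M)"
    using integral_distr[OF Wm hmL] DU unfolding U01_def by simp
  also have "\<dots> = (\<integral>t. \<integral>v. h (Wf (t,v)) \<partial>U01 \<partial>P0)"
    by (rule PP.integral_fst'[symmetric]) (use intW in simp)
  finally have eq: "(\<integral>u. h u \<partial>uniform_measure lborel {0..1}) = (\<integral>t. \<integral>v. h (Wf (t,v)) \<partial>U01 \<partial>P0)" .
  have int2: "integrable P0 (\<lambda>t. \<integral>v. h (Wf (t,v)) \<partial>U01)"
    by (rule PP.integrable_fst') (use intW in simp)
  have AE01: "AE v in U01. v \<in> {0..1}"
    unfolding U01_def by (rule AE_uniform_measureI) auto
  have pt: "h (mid_p P0 t) \<le> (\<integral>v. h (Wf (t,v)) \<partial>U01)" for t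
  proof -
    define X where "X v = Gg t + v * (G t - Gg t)" for v
    have Xeq: "Wf (t,v) = X v" for v unfolding Wf_def X_def by simp
    have Xin: "X v \<in> {0..1}" if "v \<in> {0..1}" for v
    proof -
      have "0 \<le> v * (G t - Gg t)" using that Gg_le_G[of t] by (intro mult_nonneg_nonneg) auto
      moreover have "v * (G t - Gg t) \<le> 1 * (G t - Gg t)" using that Gg_le_G[of t] by (intro mult_right_mono) auto
      ultimately show ?thesis unfolding X_def using Gg_nonneg[of t] G_le1[of t] by simp
    qed
    have idm: "(\<lambda>v::real. v) \<in> borel_measurable U01"
    proof -
      have "(\<lambda>v::real. v) \<in> borel_measurable borel" by simp
      thus ?thesis using measurable_cong_sets[OF U_sets refl] by blast
    qed
    have Xm: "X \<in> borel_measurable U01" unfolding X_def using idm by simp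
    have intid: "integrable U01 (\<lambda>v. v)"
      by (rule Bochner_Integration.integrable_bound[of _ "\<lambda>_. 1::real"]) (use idm AE01 in \<open>auto elim!: AE_mp\<close>)
    have intX: "integrable U01 X" unfolding X_def using intid by simp
    have intHX: "integrable U01 (\<lambda>v. h (X v))"
    proof (rule Bochner_Integration.integrable_bound[of _ "\<lambda>_. B"])
      show "integrable U01 (\<lambda>_. B)" by simp
      show "(\<lambda>v. h (X v)) \<in> borel_measurable U01" using measurable_compose[OF Xm hm] by simp
      show "AE v in U01. norm (h (X v)) \<le> norm B"
        using AE01 by eventually_elim (use B Xin in force)
    qed
    have "h (U.expectation X) \<le> U.expectation (\<lambda>v. h (X v))"
      by (rule U.jensens_inequality[OF intX _ _ intHX]) (auto simp: assms(3))
    moreover have "U.expectation X = mid_p P0 t"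
    proof -
      have "U.expectation X = Gg t + (G t - Gg t) * U.expectation (\<lambda>v. v)"
        unfolding X_def using intid U.prob_space by (simp add: mult.commute)
      also have "\<dots> = mid_p P0 t" unfolding U_expect mid_p_def by (simp add: field_simps)
      finally show ?thesis .
    qed
    ultimately show ?thesis unfolding Xeq by simp
  qed
  have "(\<integral>t. h (mid_p P0 t) \<partial>P0) \<le> (\<integral>t. \<integral>v. h (Wf (t,v)) \<partial>U01 \<partial>P0)"
    by (rule integral_mono[OF assms(4) int2 pt])
  thus ?thesis using eq by simp
qed

end
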